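(* Assume the standing setup below with $0<T_2<T_1<1$. Then for every $q\in[0,1]$ with $\psi(q)\in(0,1)$, the function $\psi$ is differentiable at $q$ and $\frac{d\psi}{dq}(q)>0$; that is, $\psi$ is strictly increasing in $q$ wherever $\psi\in(0,1)$.
   Context: Standing setup. $P$ is a probability distribution on $\{0,1,\dots,k_{\max}\}$ (a degree distribution with finite maximum degree $k_{\max}$) with mean $\langle k\rangle=\sum_k kP(k)>0$. The excess degree distribution is $Q(k)=(k+1)P(k+1)/\langle k\rangle$ for $k\ge 0$. Fix $T_1,T_2\in(0,1)$. For $q\in[0,1]$ and integers $k_1,k_2\ge 0$ set $$P_q(k_1,k_2)=\binom{k_1+k_2}{k_2}q^{k_2}(1-q)^{k_1}P(k_1+k_2),\qquad Q_q(k_1,k_2)=\binom{k_1+k_2}{k_2}q^{k_2}(1-q)^{k_1}Q(k_1+k_2)$$ (with $0^0=1$). For $u\in[0,1]$ define $$F_q(u)=\sum_{k_1,k_2\ge0}\big(1+(u-1)T_1\big)^{k_1}\big(1+(u-1)T_2\big)^{k_2}Q_q(k_1,k_2),\qquad G_q(u)=\sum_{k_1,k_2\ge0}\big(1+(u-1)T_1\big)^{k_1}\big(1+(u-1)T_2\big)^{k_2}P_q(k_1,k_2).$$ Let $u^*(q)$ be the smallest solution in $[0,1]$ of the fixed point equation $u=F_q(u)$ (note $u=1$ is always a solution), and set $\psi(q)=G_q(u^*(q))$ (the probability that a random node is not in the rumor outbreak; $1-\psi$ is the outbreak size). *)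

theory Defs
  imports "HOL-Analysis.Analysis"
begin

definition is_degree_dist :: "(nat \<Rightarrow> real) \<Rightarrow> nat \<Rightarrow> bool" where
  "is_degree_dist P kmax \<longleftrightarrow> (\<forall>k. 0 \<le> P k) \<and> (\<forall>k>kmax. P k = 0) \<and> (\<Sum>k\<le>kmax. P k) = 1"

definition mean_deg :: "(nat \<Rightarrow> real) \<Rightarrow> nat \<Rightarrow> real" where
  "mean_deg P kmax = (\<Sum>k\<le>kmax. real k * P k)"

definition excess_dist :: "(nat \<Rightarrow> real) \<Rightarrow> nat \<Rightarrow> nat \<Rightarrow> real" where
  "excess_dist P kmax k = real (k + 1) * P (k + 1) / mean_deg P kmax"

definition split_dist :: "(nat \<Rightarrow> real) \<Rightarrow> real \<Rightarrow> nat \<Rightarrow> nat \<Rightarrow> real" where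
  "split_dist R q k1 k2 = real ((k1 + k2) choose k2) * q ^ k2 * (1 - q) ^ k1 * R (k1 + k2)"

text \<open>Generating function; the double sum over all k1, k2 \<ge> 0 reduces to k1, k2 \<le> kmax,
  since R (k1 + k2) = 0 whenever k1 + k2 > kmax for R = P and R = Q.\<close>
definition gen_fun :: "(nat \<Rightarrow> real) \<Rightarrow> nat \<Rightarrow> real \<Rightarrow> real \<Rightarrow> real \<Rightarrow> real \<Rightarrow> real" where
  "gen_fun R kmax T1 T2 q u =
     (\<Sum>k1\<le>kmax. \<Sum>k2\<le>kmax. (1 + (u - 1) * T1) ^ k1 * (1 + (u - 1) * T2) ^ k2 * split_dist R q k1 k2)"

definition F_fun :: "(nat \<Rightarrow> real) \<Rightarrow> nat \<Rightarrow> real \<Rightarrow> real \<Rightarrow> real \<Rightarrow> real \<Rightarrow> real" where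
  "F_fun P kmax T1 T2 q u = gen_fun (excess_dist P kmax) kmax T1 T2 q u"

definition G_fun :: "(nat \<Rightarrow> real) \<Rightarrow> nat \<Rightarrow> real \<Rightarrow> real \<Rightarrow> real \<Rightarrow> real \<Rightarrow> real" where
  "G_fun P kmax T1 T2 q u = gen_fun P kmax T1 T2 q u"

definition u_star :: "(nat \<Rightarrow> real) \<Rightarrow> nat \<Rightarrow> real \<Rightarrow> real \<Rightarrow> real \<Rightarrow> real" where
  "u_star P kmax T1 T2 q = (LEAST u. u \<in> {0..1} \<and> u = F_fun P kmax T1 T2 q u)"

definition psi :: "(nat \<Rightarrow> real) \<Rightarrow> nat \<Rightarrow> real \<Rightarrow> real \<Rightarrow> real \<Rightarrow> real" where
  "psi P kmax T1 T2 q = G_fun P kmax T1 T2 q (u_star P kmax T1 T2 q)"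

end

theory Submission imports Defs begin

definition gp :: "(nat \<Rightarrow> real) \<Rightarrow> nat \<Rightarrow> real \<Rightarrow> real" where
  "gp R K y = (\<Sum>k\<le>K. R k * y ^ k)"

definition dd :: "(nat \<Rightarrow> real) \<Rightarrow> nat \<Rightarrow> real \<Rightarrow> real \<Rightarrow> real" where
  "dd R K y z = (\<Sum>k\<le>K. R k * (\<Sum>i<k. z ^ (k - Suc i) * y ^ i))"

lemma gp_diff: "gp R K y - gp R K z = (y - z) * dd R K y z"
  unfolding gp_def dd_def
  by (simp add: sum_subtractf[symmetric] sum_distrib_left right_diff_distrib[symmetric]
      power_diff_sumr2 algebra_simps)

lemma dd_diag: "dd R K y y = (\<Sum>k\<le>K. R k * (real k * y ^ (k - 1)))"
  unfolding dd_def
proof (rule sum.cong[OF refl])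
  fix k
  have "(\<Sum>i<k. y ^ (k - Suc i) * y ^ i) = (\<Sum>i<k. y ^ (k - 1))"
    by (rule sum.cong[OF refl]) (simp flip: power_add)
  then show "R k * (\<Sum>i<k. y ^ (k - Suc i) * y ^ i) = R k * (real k * y ^ (k - 1))"
    by simp
qed

lemma dd_bounds:
  assumes "\<forall>k. R k \<ge> 0" "0 \<le> y" "y \<le> 1" "0 \<le> z" "z \<le> 1"
  shows "0 \<le> dd R K y z" "dd R K y z \<le> (\<Sum>k\<le>K. R k * real k)"
proof -
  have inner: "0 \<le> (\<Sum>i<k. z ^ (k - Suc i) * y ^ i) \<and> (\<Sum>i<k. z ^ (k - Suc i) * y ^ i) \<le> real k" for k
  proof -
    have "(\<Sum>i<k. z ^ (k - Suc i) * y ^ i) \<le> (\<Sum>i<k. 1)"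
      by (rule sum_mono) (use assms in \<open>auto intro!: mult_le_one power_le_one\<close>)
    moreover have "0 \<le> (\<Sum>i<k. z ^ (k - Suc i) * y ^ i)"
      by (rule sum_nonneg) (use assms in auto)
    ultimately show ?thesis by simp
  qed
  show "0 \<le> dd R K y z" unfolding dd_def
    by (rule sum_nonneg) (use assms inner in auto)
  show "dd R K y z \<le> (\<Sum>k\<le>K. R k * real k)" unfolding dd_def
    by (rule sum_mono) (use assms inner in \<open>auto intro: mult_left_mono\<close>)
qed

lemma gp_deriv: "DERIV (gp R K) y :> (\<Sum>k\<le>K. R k * (real k * y ^ (k - 1)))"
  unfolding gp_def
  by (auto intro!: derivative_eq_intros sum.cong)

lemma term_ineq_Suc:
  fixes y :: real
  assumes "0 \<le> y" "y < 1"
  shows "real (Suc k) * (1 - y) * y ^ k \<le> 1 - y ^ Suc k \<and>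
         (k \<ge> 1 \<longrightarrow> real (Suc k) * (1 - y) * y ^ k < 1 - y ^ Suc k)"
proof (induction k)
  case 0
  then show ?case by simp
next
  case (Suc k)
  have e: "real (Suc (Suc k)) * (1 - y) * y ^ Suc k = y * (real (Suc k) * (1 - y) * y ^ k) + (1 - y) * y ^ Suc k"
    by (simp add: algebra_simps)
  have "y * (real (Suc k) * (1 - y) * y ^ k) \<le> y * (1 - y ^ Suc k)"
    using Suc.IH assms by (intro mult_left_mono) auto
  moreover have "y * (1 - y ^ Suc k) + (1 - y) * y ^ Suc k < 1 - y ^ Suc (Suc k)"
  proof -
    have "y * y ^ k \<le> y" using assms by (intro mult_left_le power_le_one) auto
    hence "y * y ^ k < 1" using assms by simp
    hence "(1 - y) * (y * y ^ k) < (1 - y) * 1" using assms by (intro mult_strict_left_mono) auto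
    thus ?thesis by (simp add: algebra_simps)
  qed
  ultimately have "real (Suc (Suc k)) * (1 - y) * y ^ Suc k < 1 - y ^ Suc (Suc k)"
    by (subst e) linarith
  then show ?case by simp
qed

lemma term_ineq:
  fixes y :: real
  assumes "0 \<le> y" "y < 1"
  shows "real k * (1 - y) * y ^ (k - 1) \<le> 1 - y ^ k"
    and "k \<ge> 2 \<Longrightarrow> real k * (1 - y) * y ^ (k - 1) < 1 - y ^ k"
proof -
  show "real k * (1 - y) * y ^ (k - 1) \<le> 1 - y ^ k"
    using term_ineq_Suc[OF assms, of "k - 1"] by (cases k) auto
  show "k \<ge> 2 \<Longrightarrow> real k * (1 - y) * y ^ (k - 1) < 1 - y ^ k"
    using term_ineq_Suc[OF assms, of "k - 1"] by (cases k) auto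
qed

lemma least_fp:
  fixes f :: "real \<Rightarrow> real"
  assumes cont: "continuous_on UNIV f" and f1: "f 1 = 1"
  shows "(LEAST u. u \<in> {0..1} \<and> u = f u) \<in> {0..1}"
    "f (LEAST u. u \<in> {0..1} \<and> u = f u) = (LEAST u. u \<in> {0..1} \<and> u = f u)"
    "\<And>y. y \<in> {0..1} \<Longrightarrow> f y = y \<Longrightarrow> (LEAST u. u \<in> {0..1} \<and> u = f u) \<le> y"
proof -
  define S where "S = {0..1} \<inter> {u. u = f u}"
  have "closed {u::real. u = f u}"
    by (rule closed_Collect_eq) (auto intro: continuous_intros cont)
  hence cS: "closed S" unfolding S_def by (intro closed_Int) auto
  have "1 \<in> S" using f1 by (simp add: S_def)
  have bS: "bdd_below S" unfolding S_def by (rule bdd_belowI[of _ 0]) auto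
  have IS: "Inf S \<in> S" using cS bS \<open>1 \<in> S\<close> by (intro closed_contains_Inf) auto
  have eq: "(LEAST u. u \<in> {0..1} \<and> u = f u) = Inf S"
    by (rule Least_equality) (use IS bS in \<open>auto simp: S_def intro!: cInf_lower\<close>)
  show "(LEAST u. u \<in> {0..1} \<and> u = f u) \<in> {0..1}" using IS eq by (simp add: S_def)
  show "f (LEAST u. u \<in> {0..1} \<and> u = f u) = (LEAST u. u \<in> {0..1} \<and> u = f u)"
    using IS eq by (simp add: S_def)
  show "\<And>y. y \<in> {0..1} \<Longrightarrow> f y = y \<Longrightarrow> (LEAST u. u \<in> {0..1} \<and> u = f u) \<le> y"
    unfolding eq using bS by (auto simp: S_def intro!: cInf_lower)
qed

lemma implicit_deriv:
  fixes U AU B :: "real \<Rightarrow> real"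
  assumes cA: "isCont AU T0" and cB: "isCont B T0"
    and eq: "eventually (\<lambda>T. AU T * (U T - U T0) = - B T * (T - T0)) (at T0)"
    and nz: "AU T0 \<noteq> 0"
  shows "DERIV U T0 :> - B T0 / AU T0"
proof -
  have "(AU \<longlongrightarrow> AU T0) (at T0)" using cA by (simp add: continuous_at)
  hence ev: "eventually (\<lambda>T. AU T \<noteq> 0) (at T0)"
    using nz tendsto_imp_eventually_ne by blast
  have lim: "((\<lambda>T. - B T / AU T) \<longlongrightarrow> - B T0 / AU T0) (at T0)"
    using cA cB nz by (intro tendsto_intros) (auto simp: continuous_at)
  have ne: "eventually (\<lambda>T. T \<noteq> T0) (at T0)" by (auto simp: eventually_at_filter)
  have "eventually (\<lambda>T. - B T / AU T = (U T - U T0) / (T - T0)) (at T0)"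
    using eq ev ne
  proof eventually_elim
    case (elim T)
    then have "U T - U T0 = - B T / AU T * (T - T0)" by (simp add: field_simps)
    then show ?case using elim by simp
  qed
  note c = tendsto_cong[OF this, of "- B T0 / AU T0"]
  have "((\<lambda>T. (U T - U T0) / (T - T0)) \<longlongrightarrow> - B T0 / AU T0) (at T0)"
    by (rule c[THEN iffD1, OF lim])
  then show ?thesis unfolding has_field_derivative_iff .
qed

lemma main_T:
  fixes Q :: "nat \<Rightarrow> real" and K :: nat and T0 :: real and U :: "real \<Rightarrow> real"
  assumes Qnn: "\<And>k. Q k \<ge> 0" and Qsum: "(\<Sum>k\<le>K. Q k) = 1"
    and T0: "0 < T0" "T0 < 1"
    and U_def: "\<And>T. U T = (LEAST u. u \<in> {0..1} \<and> u = gp Q K (1 + (u - 1) * T))"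
    and u0lt: "U T0 < 1"
  shows "\<exists>D. DERIV U T0 :> D \<and> D \<le> 0"
proof -
  define h where "h T x = gp Q K (1 + (x - 1) * T)" for T x
  define ph where "ph T x = h T x - x" for T x
  have conth: "isCont (h T) x" for T x unfolding h_def gp_def by (intro continuous_intros)
  have contph: "isCont (ph T) x" for T x unfolding ph_def using conth by (intro continuous_intros)
  have g1: "gp Q K 1 = 1" using Qsum by (simp add: gp_def)
  have Ueq: "U T = (LEAST u. u \<in> {0..1} \<and> u = h T u)" for T using U_def by (simp add: h_def)
  have h1: "h T 1 = 1" for T using g1 by (simp add: h_def)
  have contonh: "continuous_on UNIV (h T)" for T using conth by (simp add: continuous_at_imp_continuous_on)
  have fpT1: "U T \<in> {0..1}" for T
    using least_fp(1)[OF contonh h1, of T] by (simp add: Ueq)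
  have fpT2: "h T (U T) = U T" for T
    using least_fp(2)[OF contonh h1, of T] by (simp add: Ueq)
  have fpT3: "U T \<le> y" if "y \<in> {0..1}" "h T y = y" for T y
    using least_fp(3)[OF contonh h1, of y T] that by (simp add: Ueq)
  note fpT = fpT1 fpT2 fpT3
  define u0 where "u0 = U T0"
  define y0 where "y0 = 1 + (u0 - 1) * T0"
  have u0: "0 \<le> u0" "u0 < 1" using fpT(1)[of T0] u0lt by (auto simp: u0_def)
  have y0: "0 < y0" "y0 < 1"
  proof -
    have "(1 - u0) * T0 \<le> 1 * T0" using u0 T0 by (intro mult_right_mono) auto
    then show "0 < y0" using T0 by (simp add: y0_def algebra_simps)
    have "0 < (1 - u0) * T0" using u0 T0 by simp
    then show "y0 < 1" by (simp add: y0_def algebra_simps)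
  qed
  define C where "C = (\<Sum>k\<le>K. Q k * real k)"
  have C0: "C \<ge> 0" unfolding C_def using Qnn by (intro sum_nonneg) auto
  define A where "A T x = T * dd Q K (1 + (x - 1) * T) (1 + (u0 - 1) * T) - 1" for T x
  define B where "B T = (u0 - 1) * dd Q K (1 + (u0 - 1) * T) (1 + (u0 - 1) * T0)" for T
  have Aeq: "ph T x - ph T u0 = A T x * (x - u0)" for T x
    using gp_diff[of Q K "1 + (x-1)*T" "1+(u0-1)*T"] unfolding ph_def h_def A_def
    by (simp add: algebra_simps)
  have Beq: "ph T u0 - ph T0 u0 = B T * (T - T0)" for T
    using gp_diff[of Q K "1 + (u0-1)*T" "1+(u0-1)*T0"] unfolding ph_def h_def B_def
    by (simp add: algebra_simps)
  have ph0: "ph T0 u0 = 0" using fpT(2)[of T0] by (simp add: ph_def u0_def)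
  have phU: "ph T (U T) = 0" for T using fpT(2)[of T] by (simp add: ph_def)
  have Lip: "\<bar>ph T x - ph T0 x\<bar> \<le> C * \<bar>T - T0\<bar>" if x: "x \<in> {0..1}" and T: "T \<in> {0..1}" for T x
  proof -
    have a01: "0 \<le> 1 + (x - 1) * t" "1 + (x - 1) * t \<le> 1" if "t \<in> {0..1}" for t
    proof -
      have "(1 - x) * t \<le> 1 * 1" using x that by (intro mult_mono) auto
      then show "0 \<le> 1 + (x - 1) * t" by (simp add: algebra_simps)
      show "1 + (x - 1) * t \<le> 1" using x that by (simp add: mult_nonpos_nonneg)
    qed
    have T0': "T0 \<in> {0..1}" using T0 by auto
    have e: "ph T x - ph T0 x = ((x - 1) * (T - T0)) * dd Q K (1 + (x - 1) * T) (1 + (x - 1) * T0)"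
      using gp_diff[of Q K "1 + (x-1)*T" "1+(x-1)*T0"] unfolding ph_def h_def
      by (simp add: algebra_simps)
    have d: "0 \<le> dd Q K (1 + (x - 1) * T) (1 + (x - 1) * T0)" "dd Q K (1 + (x - 1) * T) (1 + (x - 1) * T0) \<le> C"
      using dd_bounds[of Q "1 + (x - 1) * T" "1 + (x - 1) * T0" K] a01[OF T] a01[OF T0'] Qnn
      by (auto simp: C_def)
    have "\<bar>ph T x - ph T0 x\<bar> = \<bar>x - 1\<bar> * \<bar>T - T0\<bar> * dd Q K (1 + (x - 1) * T) (1 + (x - 1) * T0)"
      using d by (simp add: e abs_mult)
    also have "\<dots> \<le> 1 * \<bar>T - T0\<bar> * C"
      using x d by (intro mult_mono) auto
    finally show ?thesis by (simp add: mult.commute)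
  qed
  have phi0: "ph T 0 \<ge> 0" if "T \<in> {0..1}" for T
    using that Qnn unfolding ph_def h_def gp_def by (auto intro!: sum_nonneg)
  define D1 where "D1 = (\<Sum>k\<le>K. Q k * (real k * y0 ^ (k - 1)))"
  have D1nn: "D1 \<ge> 0" unfolding D1_def using Qnn y0 by (intro sum_nonneg) auto
  have AT0eq: "A T0 u0 = T0 * D1 - 1" by (simp add: A_def D1_def dd_diag y0_def)
  have key: "T0 * D1 < 1"
  proof (cases "\<exists>k\<le>K. 2 \<le> k \<and> Q k \<noteq> 0")
    case True
    then obtain j where j: "j \<le> K" "2 \<le> j" "Q j \<noteq> 0" by blast
    define s where "s = 1 - u0"
    have s: "s > 0" using u0 by (simp add: s_def)
    have sy: "s * T0 = 1 - y0" by (simp add: s_def y0_def algebra_simps)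
    have "s * (T0 * D1) = (\<Sum>k\<le>K. Q k * (real k * (1 - y0) * y0 ^ (k - 1)))"
      unfolding D1_def sum_distrib_left
      by (rule sum.cong[OF refl]) (simp add: sy[symmetric] algebra_simps)
    also have "\<dots> < (\<Sum>k\<le>K. Q k * (1 - y0 ^ k))"
    proof (rule sum_strict_mono_ex1)
      show "\<forall>x\<in>{..K}. Q x * (real x * (1 - y0) * y0 ^ (x - 1)) \<le> Q x * (1 - y0 ^ x)"
        using Qnn term_ineq(1)[of y0] y0 by (auto intro!: mult_left_mono)
      have "Q j > 0" using Qnn[of j] j by simp
      then show "\<exists>a\<in>{..K}. Q a * (real a * (1 - y0) * y0 ^ (a - 1)) < Q a * (1 - y0 ^ a)"
        using j term_ineq(2)[of y0 j] y0 by (intro bexI[of _ j]) (auto intro!: mult_strict_left_mono)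
    qed simp
    also have "\<dots> = 1 - gp Q K y0"
      by (simp add: gp_def right_diff_distrib sum_subtractf Qsum)
    also have "gp Q K y0 = u0" using fpT(2)[of T0] by (simp add: h_def y0_def u0_def)
    finally have "s * (T0 * D1) < s * 1" by (simp add: s_def)
    then show ?thesis using s by simp
  next
    case False
    have "D1 \<le> (\<Sum>k\<le>K. Q k)" unfolding D1_def
    proof (rule sum_mono)
      fix k assume "k \<in> {..K}"
      then show "Q k * (real k * y0 ^ (k - 1)) \<le> Q k"
        using False Qnn[of k] by (cases "k = 0"; cases "k = 1") auto
    qed
    then have "D1 \<le> 1" using Qsum by simp
    then have "T0 * D1 \<le> T0 * 1" using T0 by (intro mult_left_mono) auto
    then show ?thesis using T0 by linarith
  qed
  have AT0: "A T0 u0 < 0" using key AT0eq by simp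
  have BT0: "B T0 \<le> 0"
  proof -
    have "0 \<le> dd Q K y0 y0" using dd_bounds[of Q y0 y0 K] Qnn y0 by auto
    then show ?thesis using u0 by (simp add: B_def y0_def mult_nonpos_nonneg)
  qed
  have pos_left: "ph T0 x > 0" if "0 \<le> x" "x < u0" for x
  proof (rule ccontr)
    assume "\<not> ph T0 x > 0"
    hence "ph T0 x \<le> 0" by simp
    moreover have "0 \<le> ph T0 0" using phi0[of T0] T0 by simp
    ultimately have "\<exists>z\<ge>0. z \<le> x \<and> ph T0 z = 0"
      by (intro IVT2[of "ph T0" x 0 0]) (use that contph in auto)
    then obtain z where z: "0 \<le> z" "z \<le> x" "ph T0 z = 0" by blast
    have "z \<in> {0..1}" using z that u0 by auto
    hence "u0 \<le> z" using fpT(3)[of z T0] z by (simp add: u0_def ph_def)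
    then show False using z that by simp
  qed
  have contA0: "isCont (A T0) u0" unfolding A_def dd_def by (intro continuous_intros)
  have contU: "isCont U T0"
  proof -
    have "\<exists>d>0. \<forall>T. \<bar>T - T0\<bar> < d \<longrightarrow> \<bar>U T - u0\<bar> < e" if e: "e > 0" for e
    proof -
      have "eventually (\<lambda>x. A T0 x < 0) (at u0)"
        using contA0 AT0 by (intro order_tendstoD(2)) (auto simp: continuous_at)
      then obtain d1 where d1: "d1 > 0" "\<And>x. x \<noteq> u0 \<Longrightarrow> dist x u0 < d1 \<Longrightarrow> A T0 x < 0"
        by (auto simp: eventually_at)
      define mm where "mm = min (min d1 e) (1 - u0)"
      define xp where "xp = u0 + mm / 2"
      have mpos: "mm > 0" using d1 e u0 by (simp add: mm_def)
      have mle: "mm \<le> d1" "mm \<le> e" "mm \<le> 1 - u0" by (auto simp: mm_def)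
      have xp: "u0 < xp" "xp < 1" "xp < u0 + e" "dist xp u0 < d1"
      proof -
        show "u0 < xp" "xp < 1" "xp < u0 + e" using mpos mle unfolding xp_def by linarith+
        have "dist xp u0 = mm / 2" using mpos by (simp add: xp_def dist_real_def)
        then show "dist xp u0 < d1" using mpos mle by linarith
      qed
      have c1: "ph T0 xp < 0"
      proof -
        have "ph T0 xp = A T0 xp * (xp - u0)" using Aeq[of T0 xp] ph0 by simp
        moreover have "A T0 xp < 0" using d1(2)[of xp] xp by simp
        ultimately show ?thesis using xp by (simp add: mult_neg_pos)
      qed
      obtain m where m: "m > 0" "\<And>x. x \<in> {0..u0 - e} \<Longrightarrow> ph T0 x \<ge> m"
      proof (cases "u0 - e < 0")
        case True
        then show ?thesis using that[of 1] by auto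
      next
        case False
        have "continuous_on {0..u0 - e} (ph T0)"
          using contph by (simp add: continuous_at_imp_continuous_on)
        then obtain x where x: "x \<in> {0..u0 - e}" "\<And>y. y \<in> {0..u0 - e} \<Longrightarrow> ph T0 x \<le> ph T0 y"
          using continuous_attains_inf[of "{0..u0 - e}" "ph T0"] False by auto
        have "ph T0 x > 0" using pos_left[of x] x e by auto
        then show ?thesis using that[of "ph T0 x"] x by auto
      qed
      define d where "d = min (min T0 (1 - T0)) (min (- ph T0 xp) m / (C + 1))"
      have dpos: "d > 0" using T0 c1 m C0 by (simp add: d_def)
      have "\<bar>U T - u0\<bar> < e" if T: "\<bar>T - T0\<bar> < d" for T
      proof -
        have T01: "T \<in> {0..1}" using T T0 by (auto simp: d_def abs_less_iff)
        have "C * \<bar>T - T0\<bar> \<le> (C + 1) * \<bar>T - T0\<bar>" by (simp add: algebra_simps)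
        also have "\<dots> < (C + 1) * d" using T C0 by (intro mult_strict_left_mono) auto
        also have "\<dots> \<le> (C + 1) * (min (- ph T0 xp) m / (C + 1))"
          using C0 by (intro mult_left_mono) (auto simp: d_def)
        also have "\<dots> = min (- ph T0 xp) m" using C0 by simp
        finally have E: "C * \<bar>T - T0\<bar> < - ph T0 xp" "C * \<bar>T - T0\<bar> < m" by auto
        have "xp \<in> {0..1}" using xp u0 by auto
        hence "\<bar>ph T xp - ph T0 xp\<bar> \<le> C * \<bar>T - T0\<bar>" using T01 by (rule Lip)
        hence "ph T xp < 0" using E by (simp add: abs_le_iff)
        moreover have "0 \<le> ph T 0" using phi0 T01 by simp
        moreover have "xp \<ge> 0" using xp u0 by simp
        ultimately have "\<exists>z\<ge>0. z \<le> xp \<and> ph T z = 0"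
          by (intro IVT2[of "ph T" xp 0 0]) (use contph in auto)
        then obtain z where z: "0 \<le> z" "z \<le> xp" "ph T z = 0" by blast
        have "U T \<le> z" using fpT3[of z T] z xp by (simp add: ph_def)
        hence up: "U T < u0 + e" using z xp by simp
        have lo: "U T > u0 - e"
        proof (rule ccontr)
          assume "\<not> U T > u0 - e"
          hence inL: "U T \<in> {0..u0 - e}" using fpT1[of T] by auto
          have "ph T0 (U T) \<ge> m" using m(2)[OF inL] .
          moreover have "\<bar>ph T (U T) - ph T0 (U T)\<bar> \<le> C * \<bar>T - T0\<bar>" using fpT1[of T] T01 by (rule Lip)
          ultimately show False using phU[of T] E by simp
        qed
        show ?thesis using up lo by (simp add: abs_less_iff)
      qed
      then show ?thesis using dpos by blast
    qed
    then have ed: "\<exists>d>0. \<forall>T. \<bar>T - T0\<bar> < d \<longrightarrow> \<bar>U T - U T0\<bar> < e" if "e > 0" for e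
      using that by (simp add: u0_def)
    show ?thesis unfolding continuous_at LIM_eq real_norm_def
    proof (intro allI impI)
      fix r :: real assume "r > 0"
      then obtain d where "d > 0" "\<forall>T. \<bar>T - T0\<bar> < d \<longrightarrow> \<bar>U T - U T0\<bar> < r"
        using ed by blast
      then show "\<exists>s>0. \<forall>x. x \<noteq> T0 \<and> \<bar>x - T0\<bar> < s \<longrightarrow> \<bar>U x - U T0\<bar> < r" by auto
    qed
  qed
  have contAU: "isCont (\<lambda>T. A T (U T)) T0" unfolding A_def dd_def
    using contU by (intro continuous_intros)
  have contB: "isCont B T0" unfolding B_def dd_def by (intro continuous_intros)
  have "DERIV U T0 :> - B T0 / A T0 (U T0)"
  proof (rule implicit_deriv[OF contAU contB])
    show "\<forall>\<^sub>F T in at T0. A T (U T) * (U T - U T0) = - B T * (T - T0)"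
    proof (rule always_eventually, intro allI)
      fix T
      show "A T (U T) * (U T - U T0) = - B T * (T - T0)"
        using Aeq[of T "U T"] Beq[of T] phU[of T] ph0 by (simp add: u0_def)
    qed
    show "A T0 (U T0) \<noteq> 0" using AT0 by (simp add: u0_def)
  qed
  moreover have "- B T0 / A T0 (U T0) \<le> 0"
    using divide_nonpos_neg[OF BT0 AT0] by (simp add: u0_def[symmetric])
  ultimately show ?thesis by auto
qed

lemma gen_fun_eq:
  assumes R0: "\<forall>k>K. R k = 0"
  shows "gen_fun R K T1 T2 q u = (\<Sum>n\<le>K. R n * (1 + (u-1)*((1-q)*T1 + q*T2))^n)"
proof -
  define a where "a = 1 + (u - 1) * T1"
  define b where "b = 1 + (u - 1) * T2"
  define F where "F = (\<lambda>k1 k2. a ^ k1 * b ^ k2 * split_dist R q k1 k2)"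
  have "gen_fun R K T1 T2 q u = (\<Sum>k1\<le>K. \<Sum>k2\<le>K. F k1 k2)"
    by (simp add: gen_fun_def F_def a_def b_def)
  also have "\<dots> = (\<Sum>(k1,k2)\<in>{..K}\<times>{..K}. F k1 k2)"
    by (simp add: sum.cartesian_product)
  also have "\<dots> = (\<Sum>(k1,k2)\<in>{(i,j). i+j \<le> K}. F k1 k2)"
    apply (rule sum.mono_neutral_right)
      apply simp
     apply auto[1]
    using R0 by (auto simp: F_def split_dist_def) (meson not_le)
  also have "\<dots> = (\<Sum>n\<le>K. \<Sum>i\<le>n. F i (n - i))"
    by (rule sum.triangle_reindex_eq)
  also have "\<dots> = (\<Sum>n\<le>K. R n * ((1-q)*a + q*b)^n)"
  proof (rule sum.cong[OF refl])
    fix n assume "n \<in> {..K}"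
    show "(\<Sum>i\<le>n. F i (n - i)) = R n * ((1-q)*a + q*b)^n"
    proof -
      have "R n * ((1-q)*a + q*b)^n = (\<Sum>k\<le>n. R n * (of_nat (n choose k) * ((1-q)*a)^k * (q*b)^(n-k)))"
        by (simp add: binomial_ring sum_distrib_left)
      also have "\<dots> = (\<Sum>i\<le>n. F i (n - i))"
        by (rule sum.cong[OF refl]) (auto simp: F_def split_dist_def binomial_symmetric[symmetric] power_mult_distrib)
      finally show ?thesis by simp
    qed
  qed
  also have "(1-q)*a + q*b = 1 + (u-1)*((1-q)*T1 + q*T2)"
    by (simp add: a_def b_def algebra_simps)
  finally show ?thesis .
qed

theorem lemma3:
  fixes P :: "nat \<Rightarrow> real" and kmax :: nat and T1 T2 q :: real
  assumes "is_degree_dist P kmax"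
    and "mean_deg P kmax > 0"
    and "0 < T2" and "T2 < T1" and "T1 < 1"
    and "q \<in> {0..1}"
    and "0 < psi P kmax T1 T2 q" and "psi P kmax T1 T2 q < 1"
  shows "\<exists>D. ((psi P kmax T1 T2) has_real_derivative D) (at q within {0..1}) \<and> D > 0"
proof -
  define K where "K = kmax"
  have Pnn: "\<And>k. P k \<ge> 0" and PK: "\<forall>k>K. P k = 0" and Psum: "(\<Sum>k\<le>K. P k) = 1"
    using assms(1) by (auto simp: is_degree_dist_def K_def)
  define mean where "mean = mean_deg P K"
  have mean: "mean > 0" using assms(2) by (simp add: mean_def K_def)
  define Q where "Q = excess_dist P K"
  have Qnn: "\<And>k. Q k \<ge> 0" using Pnn mean by (simp add: Q_def excess_dist_def mean_def[symmetric])
  have QK: "\<forall>k>K. Q k = 0" using PK by (simp add: Q_def excess_dist_def)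
  have "(\<Sum>k\<le>K. real (k + 1) * P (k + 1)) = mean"
  proof -
    have "(\<Sum>k\<le>Suc K. real k * P k) = real 0 * P 0 + (\<Sum>k\<le>K. real (Suc k) * P (Suc k))"
      by (rule sum.atMost_Suc_shift)
    moreover have "(\<Sum>k\<le>Suc K. real k * P k) = mean"
      using PK by (simp add: mean_def mean_deg_def)
    ultimately show ?thesis by simp
  qed
  hence Qsum: "(\<Sum>k\<le>K. Q k) = 1"
    using mean by (simp add: Q_def excess_dist_def mean_def[symmetric] sum_divide_distrib[symmetric])
  define Tf where "Tf x = (1 - x) * T1 + x * T2" for x
  define U where "U T = (LEAST u. u \<in> {0..1} \<and> u = gp Q K (1 + (u - 1) * T))" for T
  define Psi where "Psi T = gp P K (1 + (U T - 1) * T)" for T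
  have QK': "\<forall>k>kmax. excess_dist P kmax k = 0" using QK by (simp add: Q_def K_def)
  have PK': "\<forall>k>kmax. P k = 0" using PK by (simp add: K_def)
  have Feq: "F_fun P kmax T1 T2 x u = gp Q K (1 + (u - 1) * Tf x)" for x u
    unfolding F_fun_def gen_fun_eq[OF QK'] gp_def Tf_def Q_def K_def by (simp add: algebra_simps)
  have Geq: "G_fun P kmax T1 T2 x u = gp P K (1 + (u - 1) * Tf x)" for x u
    unfolding G_fun_def gen_fun_eq[OF PK'] gp_def Tf_def K_def by (simp add: algebra_simps)
  have ueq: "u_star P kmax T1 T2 x = U (Tf x)" for x
    unfolding u_star_def U_def Feq ..
  have psi_eq: "psi P kmax T1 T2 = (\<lambda>x. Psi (Tf x))"
    unfolding psi_def Geq ueq Psi_def ..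
  define T0 where "T0 = Tf q"
  have T0: "0 < T0" "T0 < 1"
  proof -
    have "T0 = T1 - q * (T1 - T2)" by (simp add: T0_def Tf_def algebra_simps)
    moreover have "q * (T1 - T2) \<le> T1 - T2"
      using mult_right_mono[of q 1 "T1 - T2"] assms by auto
    moreover have "q * (T1 - T2) \<ge> 0" using assms by auto
    ultimately have "0 < T0 \<and> T0 < 1" using assms(3-5) by linarith
    then show "0 < T0" "T0 < 1" by auto
  qed
  have contf: "continuous_on UNIV (\<lambda>u. gp Q K (1 + (u - 1) * T0))"
    unfolding gp_def by (intro continuous_intros)
  have f1: "gp Q K (1 + (1 - 1) * T0) = 1" using Qsum by (simp add: gp_def)
  have u01: "U T0 \<in> {0..1}" using least_fp(1)[OF contf f1] by (simp add: U_def)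
  have "U T0 \<noteq> 1"
  proof
    assume "U T0 = 1"
    hence "psi P kmax T1 T2 q = 1" using Psum by (simp add: psi_eq Psi_def T0_def[symmetric] gp_def)
    then show False using assms(8) by simp
  qed
  hence u0lt: "U T0 < 1" using u01 by simp
  obtain D where dU: "DERIV U T0 :> D" and D: "D \<le> 0"
    using main_T[OF Qnn Qsum T0 U_def u0lt] by blast
  define y0 where "y0 = 1 + (U T0 - 1) * T0"
  have y0: "y0 > 0"
  proof -
    have "(1 - U T0) * T0 \<le> 1 * T0" using u01 T0 by (intro mult_right_mono) auto
    then show ?thesis using T0 by (simp add: y0_def algebra_simps)
  qed
  define gd where "gd = (\<Sum>k\<le>K. P k * (real k * y0 ^ (k - 1)))"
  have gd: "gd > 0"
  proof -
    have "\<exists>k\<le>K. real k * P k > 0"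
    proof (rule ccontr)
      assume "\<not> ?thesis"
      hence "mean \<le> 0" unfolding mean_def mean_deg_def by (intro sum_nonpos) auto
      then show False using mean by simp
    qed
    then obtain k where k: "k \<le> K" "real k * P k > 0" by blast
    have tk: "0 < P k * (real k * y0 ^ (k - 1))"
    proof -
      have "0 < (real k * P k) * y0 ^ (k - 1)" by (rule mult_pos_pos[OF k(2) zero_less_power[OF y0]])
      thus ?thesis by (simp add: ac_simps)
    qed
    show ?thesis unfolding gd_def
      using k tk y0 Pnn by (intro sum_pos2[of _ k]) auto
  qed
  have d1: "DERIV (\<lambda>T. 1 + (U T - 1) * T) T0 :> D * T0 + (U T0 - 1)"
    using dU by (auto intro!: derivative_eq_intros simp: algebra_simps)
  have d2: "DERIV Psi T0 :> gd * (D * T0 + (U T0 - 1))"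
    unfolding Psi_def gd_def
    using DERIV_chain2[OF gp_deriv[of P K "1 + (U T0 - 1) * T0"] d1] by (simp add: y0_def)
  have d3: "DERIV Tf q :> T2 - T1" unfolding Tf_def by (auto intro!: derivative_eq_intros)
  have d4: "DERIV (\<lambda>x. Psi (Tf x)) q :> gd * (D * T0 + (U T0 - 1)) * (T2 - T1)"
    using DERIV_chain2[OF d2[unfolded T0_def] d3] by (simp add: T0_def)
  have pos: "gd * (D * T0 + (U T0 - 1)) * (T2 - T1) > 0"
  proof -
    have "D * T0 \<le> 0" using D T0 by (simp add: mult_nonpos_nonneg)
    hence "D * T0 + (U T0 - 1) < 0" using u0lt by simp
    moreover have "T2 - T1 < 0" using assms by simp
    ultimately have "(D * T0 + (U T0 - 1)) * (T2 - T1) > 0" by (simp add: mult_neg_neg)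
    thus ?thesis using gd by (simp add: mult.assoc)
  qed
  have "((\<lambda>x. Psi (Tf x)) has_real_derivative gd * (D * T0 + (U T0 - 1)) * (T2 - T1)) (at q within {0..1})"
    by (rule has_field_derivative_at_within[OF d4])
  then show ?thesis unfolding psi_eq using pos by (intro exI conjI)
qed

end
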